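(* In the fixed-design setting of the context, let $P$ be the orthogonal projection of $\mathcal H$ onto $\mathcal H_m$. Then for every $\lambda>0$, \[ \mathbb E\big[\widehat{\mathcal E}_\lambda(Pf_{\lambda,\gamma})\big]\le \frac{2}{n\lambda}\operatorname{tr}\!\big(K-\widetilde K\big)\,\mathbb E\big[\widehat{\mathcal E}_\lambda(f_{\lambda,\gamma})\big]+2\,\mathbb E\big[\widehat{\mathcal E}_\lambda(f_{\lambda,\gamma})\big]. \]
   Context: Let $\mathcal X$ be a set and $k_\gamma$ a positive definite kernel on $\mathcal X$ with RKHS $\mathcal H$. Fixed points $x_1,\dots,x_n\in\mathcal X$, $f^*:\mathcal X\to\mathbb R$, labels $y_i=f^*(x_i)+\epsilon_i$ with $\epsilon_i$ i.i.d. real, $\mathbb E[\epsilon_i]=0$, $\mathbb E[\epsilon_i^2]=\sigma^2$; $Y=(y_i)_i$, $f(X)=(f(x_i))_i$. Fixed inducing points $z_1,\dots,z_m$. $K_{ij}=k_\gamma(x_i,x_j)$, $(K_{nm})_{ij}=k_\gamma(x_i,z_j)$, $(K_{mm})_{ij}=k_\gamma(z_i,z_j)$, $\widetilde K=K_{nm}K_{mm}^\dagger K_{nm}^\top$ ($\dagger$ = Moore–Penrose pseudo-inverse). $\widehat{\mathcal E}_\lambda(f)=\frac1n\|f(X)-Y\|^2+\lambda\|f\|_{\mathcal H}^2$. $\mathcal H_m=\operatorname{span}\{k_\gamma(z_j,\cdot)\}_{j=1}^m$. The noise-less KRR estimator is $f_{\lambda,\gamma}=\arg\min_{f\in\mathcal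 H}\frac1n\|f(X)-f^*(X)\|^2+\lambda\|f\|_{\mathcal H}^2$ (deterministic). Expectation is over the noise. *)

theory Defs
  imports "HOL-Analysis.Analysis" "HOL-Probability.Probability"
begin

definition mat_trace :: "real^'n^'n \<Rightarrow> real" where
  "mat_trace A = (\<Sum>i\<in>UNIV. A $ i $ i)"

definition is_mp_pinv :: "real^'m^'n \<Rightarrow> real^'n^'m \<Rightarrow> bool" where
  "is_mp_pinv A B \<longleftrightarrow> A ** B ** A = A \<and> B ** A ** B = B \<and>
     transpose (A ** B) = A ** B \<and> transpose (B ** A) = B ** A"

definition mp_pinv :: "real^'m^'n \<Rightarrow> real^'n^'m" where
  "mp_pinv A = (THE B. is_mp_pinv A B)"

definition orth_proj :: "'h::real_inner set \<Rightarrow> 'h \<Rightarrow> 'h" where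
  "orth_proj S h = (THE p. p \<in> S \<and> (\<forall>s\<in>S. inner (h - p) s = 0))"

definition kmat_nn :: "('a \<Rightarrow> 'a \<Rightarrow> real) \<Rightarrow> ('n::finite \<Rightarrow> 'a) \<Rightarrow> real^'n^'n" where
  "kmat_nn k x = (\<chi> i j. k (x i) (x j))"

definition kmat_nm :: "('a \<Rightarrow> 'a \<Rightarrow> real) \<Rightarrow> ('n::finite \<Rightarrow> 'a) \<Rightarrow> ('m::finite \<Rightarrow> 'a) \<Rightarrow> real^'m^'n" where
  "kmat_nm k x z = (\<chi> i j. k (x i) (z j))"

definition kmat_tilde :: "('a \<Rightarrow> 'a \<Rightarrow> real) \<Rightarrow> ('n::finite \<Rightarrow> 'a) \<Rightarrow> ('m::finite \<Rightarrow> 'a) \<Rightarrow> real^'n^'n" where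
  "kmat_tilde k x z = kmat_nm k x z ** mp_pinv (kmat_nn k z) ** transpose (kmat_nm k x z)"

text \<open>Regularized empirical risk of the RKHS element represented by h (the function
  u \<mapsto> inner h (phi u), with RKHS norm norm h), for label vector Y.\<close>
definition emp_risk :: "real \<Rightarrow> ('a \<Rightarrow> 'h::real_inner) \<Rightarrow> ('n::finite \<Rightarrow> 'a) \<Rightarrow> ('n \<Rightarrow> real) \<Rightarrow> 'h \<Rightarrow> real" where
  "emp_risk lam phi x Y h =
     (1 / real CARD('n)) * (\<Sum>i\<in>UNIV. (inner h (phi (x i)) - Y i)\<^sup>2) + lam * (norm h)\<^sup>2"

end

theory Submission
  imports Defs
begin


lemma mm_sub_ldistrib: "(A::real^'n^'m) ** (B - C) = A ** B - A ** C"
  by (simp add: matrix_matrix_mult_def vec_eq_iff sum_subtractf right_diff_distrib)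
lemma mm_sub_rdistrib: "((A::real^'n^'m) - B) ** C = A ** C - B ** C"
  by (simp add: matrix_matrix_mult_def vec_eq_iff sum_subtractf left_diff_distrib)
lemma mm_add_rdistrib: "((A::real^'n^'m) + B) ** C = A ** C + B ** C"
  by (simp add: matrix_matrix_mult_def vec_eq_iff sum.distrib distrib_right)
lemma transpose_diff: "transpose ((A::real^'n^'m) - B) = transpose A - transpose B"
  by (simp add: transpose_def vec_eq_iff)
lemma transpose_inj: "transpose (A::real^'n^'m) = transpose B \<Longrightarrow> A = B"
  by (metis transpose_transpose)

lemma mp_unique:
  fixes A :: "real^'m^'n"
  assumes "is_mp_pinv A B1" "is_mp_pinv A B2"
  shows "B1 = B2"
proof -
  have a1: "A ** B1 ** A = A" "B1 ** A ** B1 = B1" "transpose (A ** B1) = A ** B1" "transpose (B1 ** A) = B1 ** A"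
    using assms(1) unfolding is_mp_pinv_def by auto
  have a2: "A ** B2 ** A = A" "B2 ** A ** B2 = B2" "transpose (A ** B2) = A ** B2" "transpose (B2 ** A) = B2 ** A"
    using assms(2) unfolding is_mp_pinv_def by auto
  have tA: "transpose A = transpose A ** transpose B2 ** transpose A"
    by (metis a2(1) matrix_transpose_mul matrix_mul_assoc)
  have "B1 = B1 ** (A ** B1)" using a1(2) by (simp add: matrix_mul_assoc)
  also have "\<dots> = B1 ** transpose B1 ** transpose A"
    by (metis a1(3) matrix_transpose_mul matrix_mul_assoc)
  also have "\<dots> = B1 ** transpose B1 ** (transpose A ** transpose B2 ** transpose A)"
    using tA by simp
  also have "\<dots> = B1 ** transpose (A ** B1) ** transpose (A ** B2)"
    by (simp add: matrix_transpose_mul matrix_mul_assoc)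
  also have "\<dots> = B1 ** A ** B2"
    using a1 a2 by (simp add: matrix_mul_assoc)
  finally have e1: "B1 = B1 ** A ** B2" .
  have "B2 = (B2 ** A) ** B2" using a2(2) by simp
  also have "\<dots> = transpose A ** transpose B2 ** B2"
    by (metis a2(4) matrix_transpose_mul)
  also have "\<dots> = (transpose A ** transpose B1 ** transpose A) ** transpose B2 ** B2"
    by (metis a1(1) matrix_transpose_mul matrix_mul_assoc)
  also have "\<dots> = transpose (B1 ** A) ** transpose (B2 ** A) ** B2"
    by (simp add: matrix_transpose_mul matrix_mul_assoc)
  also have "\<dots> = B1 ** A ** B2"
    using a1 a2 by (metis matrix_mul_assoc)
  finally show ?thesis using e1 by simp
qed




lemma sym_inner:
  fixes A :: "real^'m^'m"
  assumes "transpose A = A"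
  shows "inner (A *v w) y = inner w (A *v y)"
  by (metis assms dot_lmul_matrix transpose_matrix_vector)

lemma mp_from_proj:
  fixes A Pm Li :: "real^'m^'m"
  assumes F1: "A ** Pm = A" and F2: "Pm ** A = A" and F3: "Pm ** Pm = Pm"
    and F4: "transpose Pm = Pm"
    and I1: "Li ** (A + mat 1 - Pm) = mat 1" and I2: "(A + mat 1 - Pm) ** Li = mat 1"
  shows "is_mp_pinv A (Li - (mat 1 - Pm))"
proof -
  define L where "L = A + mat 1 - Pm"
  have LP: "L ** Pm = A" unfolding L_def using F1 F3 by (simp add: mm_sub_rdistrib mm_add_rdistrib)
  have PL: "Pm ** L = A" unfolding L_def using F2 F3 by (simp add: mm_sub_ldistrib matrix_add_ldistrib)
  have QL: "(mat 1 - Pm) ** L = mat 1 - Pm" using PL by (simp add: mm_sub_rdistrib L_def)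
  have I1': "Li ** L = mat 1" and I2': "L ** Li = mat 1" using I1 I2 L_def by auto
  have LiA: "Li ** A = Pm"
  proof -
    have "Li ** A = (Li ** L) ** Pm" by (metis LP matrix_mul_assoc)
    then show ?thesis using I1' by simp
  qed
  have ALi: "A ** Li = Pm"
  proof -
    have "A ** Li = Pm ** (L ** Li)" by (metis PL matrix_mul_assoc)
    then show ?thesis using I2' by simp
  qed
  have QLi: "(mat 1 - Pm) ** Li = mat 1 - Pm"
  proof -
    have "(mat 1 - Pm) ** Li = (mat 1 - Pm) ** (L ** Li)" by (metis QL matrix_mul_assoc)
    then show ?thesis using I2' by simp
  qed
  define B where "B = Li - (mat 1 - Pm)"
  have AB: "A ** B = Pm" unfolding B_def using ALi F1 by (simp add: mm_sub_ldistrib)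
  have BA: "B ** A = Pm" unfolding B_def using LiA F2 by (simp add: mm_sub_rdistrib)
  have "Li - (mat 1 - Pm) = Li - (mat 1 - Pm) ** Li" using QLi by simp
  also have "\<dots> = (mat 1 - (mat 1 - Pm)) ** Li" by (simp add: mm_sub_rdistrib)
  finally have B2: "B = Pm ** Li" by (simp add: B_def)
  have "A ** B ** A = A" using AB F2 by simp
  moreover have "B ** A ** B = B" using BA B2 F3 by (simp add: matrix_mul_assoc)
  ultimately show ?thesis unfolding is_mp_pinv_def B_def[symmetric] using AB BA F4 by simp
qed




lemma proj_exists:
  fixes A :: "real^'m^'m"
  assumes sym: "transpose A = A"
  shows "\<exists>Pm. A ** Pm = A \<and> Pm ** A = A \<and> Pm ** Pm = Pm \<and> transpose Pm = Pm \<and>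
              (\<forall>y. (A + mat 1 - Pm) *v y = 0 \<longrightarrow> y = 0)"
proof -
  define R where "R = range (\<lambda>v. A *v v)"
  have subR: "subspace R" unfolding R_def
    by (metis matrix_vector_mul_linear linear_subspace_image subspace_UNIV)
  obtain U where U: "U \<subseteq> R" "pairwise orthogonal U" "\<And>x. x \<in> U \<Longrightarrow> norm x = 1"
     "independent U" "span U = R"
    using orthonormal_basis_subspace[OF subR] by metis
  have finU: "finite U" using U(4) by (rule independent_imp_finite)
  define Pm :: "real^'m^'m" where "Pm = (\<chi> i j. \<Sum>u\<in>U. u$i * u$j)"
  have Pmv: "Pm *v y = (\<Sum>u\<in>U. inner u y *\<^sub>R u)" for y
    unfolding Pm_def
    by (simp add: vec_eq_iff matrix_vector_mult_def inner_vec_def sum_distrib_left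
        sum_distrib_right sum_component mult.commute mult.left_commute; intro allI; rule sum.swap)
  have tP: "transpose Pm = Pm" unfolding Pm_def transpose_def by (simp add: vec_eq_iff mult.commute)
  have onU: "Pm *v u = u" if "u \<in> U" for u
  proof -
    have "Pm *v u = (\<Sum>u'\<in>U. (if u' = u then u' else 0))"
      unfolding Pmv
    proof (rule sum.cong[OF refl])
      fix u' assume "u' \<in> U"
      then have "inner u' u = (if u' = u then 1 else 0)"
        using U(2,3) that by (auto simp: pairwise_def orthogonal_def norm_eq_1)
      then show "inner u' u *\<^sub>R u' = (if u' = u then u' else 0)" by simp
    qed
    also have "\<dots> = u" using finU that by (simp add: sum.delta')
    finally show ?thesis .
  qed
  have onR: "Pm *v r = r" if "r \<in> R" for r
  proof -
    have "r \<in> span U" using that U(5) by simp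
    then show ?thesis
    proof (induction rule: span_induct_alt)
      case base then show ?case by simp
    next
      case (step c x y) then show ?case
        using onU by (simp add: matrix_vector_right_distrib matrix_vector_mult_scaleR)
    qed
  qed
  have inR: "Pm *v y \<in> R" for y
    unfolding Pmv using U(1) subR
    by (intro subspace_sum subspace_mul) auto
  have orth: "inner (y - Pm *v y) r = 0" if "r \<in> R" for y r
  proof -
    have "inner (Pm *v y) r = inner y (Pm *v r)" using sym_inner[OF tP] by simp
    then show ?thesis using onR[OF that] by (simp add: inner_diff_left)
  qed
  have F2: "Pm ** A = A"
    by (subst matrix_eq) (auto simp: matrix_vector_mul_assoc[symmetric] R_def intro!: onR)
  have F1: "A ** Pm = A"
    by (rule transpose_inj) (simp add: matrix_transpose_mul tP sym F2)
  have F3: "Pm ** Pm = Pm"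
    by (subst matrix_eq) (auto simp: matrix_vector_mul_assoc[symmetric] intro!: onR inR)
  have inj: "y = 0" if "(A + mat 1 - Pm) *v y = 0" for y
  proof -
    define a where "a = A *v y"
    define q where "q = y - Pm *v y"
    have aR: "a \<in> R" unfolding a_def R_def by simp
    have "a + q = 0" using that unfolding a_def q_def
      by (simp add: matrix_vector_mult_add_rdistrib matrix_vector_mult_diff_rdistrib algebra_simps)
    then have "a = - q" by (simp add: eq_neg_iff_add_eq_0)
    moreover have "inner q a = 0" unfolding q_def using orth[OF aR] .
    ultimately have "inner a a = 0" by simp
    then have a0: "a = 0" by simp
    then have "q = 0" using \<open>a + q = 0\<close> by simp
    then have "y \<in> R" using inR[of y] unfolding q_def by simp
    then obtain w where w: "y = A *v w" unfolding R_def by auto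
    have "inner y y = inner w (A *v y)" using w sym_inner[OF sym] by simp
    also have "\<dots> = 0" using a0 a_def by simp
    finally show ?thesis by simp
  qed
  show ?thesis using F1 F2 F3 tP inj by blast
qed

lemma mp_exists_sym:
  fixes A :: "real^'m^'m"
  assumes sym: "transpose A = A"
  shows "is_mp_pinv A (mp_pinv A)"
proof -
  obtain Pm where P: "A ** Pm = A" "Pm ** A = A" "Pm ** Pm = Pm" "transpose Pm = Pm"
    "\<And>y. (A + mat 1 - Pm) *v y = 0 \<Longrightarrow> y = 0"
    using proj_exists[OF sym] by blast
  obtain Li where Li: "Li ** (A + mat 1 - Pm) = mat 1"
    using P(5) matrix_left_invertible_ker by blast
  then have Li2: "(A + mat 1 - Pm) ** Li = mat 1" using matrix_left_right_inverse by blast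
  have ex: "is_mp_pinv A (Li - (mat 1 - Pm))" by (rule mp_from_proj[OF P(1-4) Li Li2])
  show ?thesis unfolding mp_pinv_def
    by (rule theI[where a = "Li - (mat 1 - Pm)"]) (use ex mp_unique in blast)+
qed




definition bvec :: "('m::finite \<Rightarrow> 'h::real_inner) \<Rightarrow> 'h \<Rightarrow> real^'m" where
  "bvec psi h = (\<chi> j. inner (psi j) h)"
definition comb :: "('m::finite \<Rightarrow> 'h::real_inner) \<Rightarrow> real^'m \<Rightarrow> 'h" where
  "comb psi c = (\<Sum>j\<in>UNIV. c$j *\<^sub>R psi j)"

lemma inner_comb: "inner (comb psi c) h = inner c (bvec psi h)"
  by (simp add: comb_def bvec_def inner_sum_left inner_vec_def)

lemma bvec_comb:
  assumes "A = (\<chi> j l. inner (psi j) (psi l))"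
  shows "bvec psi (comb psi c) = A *v c"
  by (simp add: assms comb_def bvec_def vec_eq_iff matrix_vector_mult_def inner_sum_right mult.commute)

lemma gram_sym:
  assumes "A = (\<chi> j l. inner (psi j) (psi l))"
  shows "transpose A = (A :: real^'m::finite^'m)"
  by (simp add: assms transpose_def vec_eq_iff inner_commute)

lemma range_gram:
  fixes psi :: "'m::finite \<Rightarrow> 'h::real_inner"
  assumes Adef: "A = (\<chi> j l. inner (psi j) (psi l))" and mp: "is_mp_pinv A B"
  shows "A *v (B *v bvec psi h) = bvec psi h"
proof -
  have sym: "transpose A = A" by (rule gram_sym[OF Adef])
  have ABA: "A ** B ** A = A" and tAB: "transpose (A ** B) = A ** B"
    using mp unfolding is_mp_pinv_def by auto
  define b where "b = bvec psi h"
  define d where "d = b - A *v (B *v b)"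
  have perp: "inner d (A *v v) = 0" for v
  proof -
    have "inner (A *v (B *v b)) (A *v v) = inner ((A ** B) *v b) (A *v v)"
      by (simp add: matrix_vector_mul_assoc)
    also have "\<dots> = inner b ((A ** B) *v (A *v v))"
      using sym_inner[OF tAB] by simp
    also have "\<dots> = inner b (A *v v)" using ABA by (simp add: matrix_vector_mul_assoc)
    finally show ?thesis unfolding d_def by (simp add: inner_diff_left)
  qed
  have Ad: "A *v d = 0"
  proof -
    have "inner (A *v d) (A *v d) = inner d (A *v (A *v d))" using sym_inner[OF sym] by simp
    also have "\<dots> = 0" using perp by simp
    finally show ?thesis by simp
  qed
  have "inner (comb psi d) (comb psi d) = inner d (A *v d)"
    by (simp add: inner_comb bvec_comb[OF Adef])
  then have "comb psi d = 0" using Ad by simp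
  then have bd: "inner d b = 0" using inner_comb[of psi d h] unfolding b_def by simp
  have "inner (A *v (B *v b)) d = inner (B *v b) (A *v d)" using sym_inner[OF sym] by simp
  then have "inner (A *v (B *v b)) d = 0" using Ad by simp
  moreover have "inner d d = inner (b - A *v (B *v b)) d" by (simp only: d_def[symmetric])
  moreover have "inner (b - A *v (B *v b)) d = inner b d - inner (A *v (B *v b)) d"
    by (rule inner_diff_left)
  moreover have "inner b d = 0" using bd by (simp add: inner_commute)
  ultimately have "inner d d = 0" by simp
  then show ?thesis unfolding b_def[symmetric] using d_def by simp
qed

lemma orth_proj_char:
  fixes S :: "'h::real_inner set"
  assumes "subspace S" "p \<in> S" "\<And>s. s \<in> S \<Longrightarrow> inner (h - p) s = 0"
  shows "orth_proj S h = p"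
  unfolding orth_proj_def
proof (rule the_equality)
  show "p \<in> S \<and> (\<forall>s\<in>S. inner (h - p) s = 0)" using assms by auto
next
  fix p' assume p': "p' \<in> S \<and> (\<forall>s\<in>S. inner (h - p') s = 0)"
  have "p - p' \<in> S" using assms(1,2) p' by (simp add: subspace_diff)
  then have "inner (h - p') (p - p') = 0" "inner (h - p) (p - p') = 0" using p' assms(3) by auto
  moreover have "p - p' = (h - p') - (h - p)" by simp
  ultimately have "inner (p - p') (p - p') = 0"
    by (simp only: inner_diff_left)
  then show "p' = p" by simp
qed

lemma proj_gram:
  fixes psi :: "'m::finite \<Rightarrow> 'h::real_inner"
  assumes Adef: "A = (\<chi> j l. inner (psi j) (psi l))" and mp: "is_mp_pinv A B"
  shows "orth_proj (span (range psi)) h = comb psi (B *v bvec psi h)"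
    and "orth_proj (span (range psi)) h \<in> span (range psi)"
    and "\<And>s. s \<in> span (range psi) \<Longrightarrow> inner (h - orth_proj (span (range psi)) h) s = 0"
proof -
  define p where "p = comb psi (B *v bvec psi h)"
  have pS: "p \<in> span (range psi)" unfolding p_def comb_def
    by (intro span_sum span_mul span_base) auto
  have o1: "inner (h - p) (psi j) = 0" for j
  proof -
    have "inner (psi j) p = (bvec psi p) $ j" by (simp add: bvec_def)
    also have "\<dots> = (bvec psi h) $ j" unfolding p_def bvec_comb[OF Adef] range_gram[OF Adef mp] ..
    finally show ?thesis by (simp add: bvec_def inner_diff_left inner_diff_right inner_commute)
  qed
  have o2: "inner (h - p) s = 0" if "s \<in> span (range psi)" for s
    using orthogonal_to_span[OF that, of "h - p"] o1 by (auto simp: orthogonal_def)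
  have eq: "orth_proj (span (range psi)) h = p"
    by (rule orth_proj_char[OF subspace_span pS o2])
  show "orth_proj (span (range psi)) h = comb psi (B *v bvec psi h)" using eq p_def by simp
  show "orth_proj (span (range psi)) h \<in> span (range psi)" using eq pS by simp
  show "\<And>s. s \<in> span (range psi) \<Longrightarrow> inner (h - orth_proj (span (range psi)) h) s = 0"
    using eq o2 by simp
qed




lemma tilde_diag:
  fixes M :: "real^'m^'n" and B :: "real^'m^'m"
  shows "(M ** B ** transpose M) $ i $ i = inner (M$i) (B *v (M$i))"
proof -
  have "(M ** B ** transpose M) $ i $ i = (\<Sum>l\<in>UNIV. \<Sum>j\<in>UNIV. M$i$j * B$j$l * M$i$l)"
    by (simp add: matrix_matrix_mult_def transpose_def sum_distrib_right)
  also have "\<dots> = (\<Sum>j\<in>UNIV. \<Sum>l\<in>UNIV. M$i$j * B$j$l * M$i$l)" by (rule sum.swap)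
  also have "\<dots> = inner (M$i) (B *v (M$i))"
    by (simp add: inner_vec_def matrix_vector_mult_def sum_distrib_left mult.assoc)
  finally show ?thesis .
qed

lemma pointwise:
  fixes n lam Nf NPf :: real and r q t :: "'n::finite \<Rightarrow> real"
  assumes n: "n > 0" and lam: "lam > 0" and cs: "\<And>i. (q i)\<^sup>2 \<le> Nf * t i"
    and t: "\<And>i. t i \<ge> 0" and NP: "NPf \<le> Nf" and N0: "Nf \<ge> 0"
  shows "(1/n) * (\<Sum>i\<in>UNIV. (r i - q i)\<^sup>2) + lam * NPf
     \<le> 2 / (n * lam) * (\<Sum>i\<in>UNIV. t i) * ((1/n) * (\<Sum>i\<in>UNIV. (r i)\<^sup>2) + lam * Nf)
       + 2 * ((1/n) * (\<Sum>i\<in>UNIV. (r i)\<^sup>2) + lam * Nf)"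
proof -
  define R where "R = (\<Sum>i\<in>UNIV. (r i)\<^sup>2)"
  define T where "T = (\<Sum>i\<in>UNIV. t i)"
  have R0: "R \<ge> 0" unfolding R_def by (intro sum_nonneg) auto
  have T0: "T \<ge> 0" unfolding T_def using t by (intro sum_nonneg) auto
  have "(r i - q i)\<^sup>2 \<le> 2 * (r i)\<^sup>2 + 2 * (Nf * t i)" for i
  proof -
    have "2 * (r i)\<^sup>2 + 2 * (q i)\<^sup>2 - (r i - q i)\<^sup>2 = (r i + q i)\<^sup>2"
      by (simp add: power2_eq_square algebra_simps)
    then have "(r i - q i)\<^sup>2 \<le> 2 * (r i)\<^sup>2 + 2 * (q i)\<^sup>2"
      using zero_le_power2[of "r i + q i"] by linarith
    then show ?thesis using cs[of i] by linarith
  qed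
  then have "(\<Sum>i\<in>UNIV. (r i - q i)\<^sup>2) \<le> (\<Sum>i\<in>UNIV. 2 * (r i)\<^sup>2 + 2 * (Nf * t i))"
    by (rule sum_mono)
  also have "\<dots> = 2 * R + 2 * Nf * T"
    by (simp add: R_def T_def sum.distrib sum_distrib_left mult.assoc)
  finally have S: "(\<Sum>i\<in>UNIV. (r i - q i)\<^sup>2) \<le> 2 * R + 2 * Nf * T" .
  have "(1/n) * (\<Sum>i\<in>UNIV. (r i - q i)\<^sup>2) + lam * NPf \<le> (1/n) * (2 * R + 2 * Nf * T) + lam * Nf"
    using S NP n lam by (intro add_mono mult_left_mono) auto
  also have "\<dots> = 2/n * R + 2/(n*lam) * T * (lam * Nf) + lam * Nf"
    using lam by (simp add: field_simps add_divide_distrib)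
  also have "\<dots> \<le> 2 / (n * lam) * T * ((1/n) * R + lam * Nf) + 2 * ((1/n) * R + lam * Nf)"
  proof -
    have "0 \<le> 2 / (n * lam) * T * ((1/n) * R)" using n lam T0 R0 by simp
    moreover have "lam * Nf \<ge> 0" using lam N0 by simp
    moreover have "2 / (n * lam) * T * ((1/n) * R + lam * Nf) + 2 * ((1/n) * R + lam * Nf)
       = 2 / (n * lam) * T * ((1/n) * R) + 2 / (n * lam) * T * (lam * Nf) + 2/n * R + 2 * (lam * Nf)"
      by (simp add: distrib_left)
    ultimately show ?thesis by linarith
  qed
  finally show ?thesis unfolding R_def T_def .
qed




lemma integrable_sq_shift:
  fixes e :: "'w \<Rightarrow> real"
  assumes prob: "prob_space M" and meas: "e \<in> borel_measurable M"
    and sq: "integrable M (\<lambda>w. (e w)\<^sup>2)"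
  shows "integrable M (\<lambda>w. (a - e w)\<^sup>2)"
proof -
  interpret prob_space M by (rule prob)
  have ie: "integrable M e" by (rule square_integrable_imp_integrable[OF meas sq])
  have "integrable M (\<lambda>w. a\<^sup>2 - 2 * a * e w + (e w)\<^sup>2)"
    using ie sq by (intro Bochner_Integration.integrable_add Bochner_Integration.integrable_diff integrable_mult_right) auto
  moreover have "(\<lambda>w. a\<^sup>2 - 2 * a * e w + (e w)\<^sup>2) = (\<lambda>w. (a - e w)\<^sup>2)"
    by (simp add: power2_diff algebra_simps)
  ultimately show ?thesis by simp
qed

lemma integrable_emp:
  fixes phi :: "'a \<Rightarrow> 'h::real_inner" and x :: "'n::finite \<Rightarrow> 'a"
  assumes prob: "prob_space M" and meas: "\<And>i. eps i \<in> borel_measurable M"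
    and sq: "\<And>i. integrable M (\<lambda>w. (eps i w)\<^sup>2)"
  shows "integrable M (\<lambda>w. emp_risk lam phi x (\<lambda>i. g i + eps i w) h)"
proof -
  interpret prob_space M by (rule prob)
  have "integrable M (\<lambda>w. (inner h (phi (x i)) - g i - eps i w)\<^sup>2)" for i
    by (rule integrable_sq_shift[OF prob meas sq])
  then have "integrable M (\<lambda>w. (inner h (phi (x i)) - (g i + eps i w))\<^sup>2)" for i
    by (simp add: diff_diff_eq)
  then have "integrable M (\<lambda>w. (\<Sum>i\<in>UNIV. (inner h (phi (x i)) - (g i + eps i w))\<^sup>2))"
    by (intro Bochner_Integration.integrable_sum) auto
  then have "integrable M (\<lambda>w. 1 / real CARD('n) * (\<Sum>i\<in>UNIV. (inner h (phi (x i)) - (g i + eps i w))\<^sup>2))"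
    by (rule integrable_mult_right)
  moreover have "integrable M (\<lambda>w. lam * (norm h)\<^sup>2)" by simp
  ultimately show ?thesis unfolding emp_risk_def by (rule Bochner_Integration.integrable_add)
qed




theorem mainTheorem3:
  fixes k :: "'a \<Rightarrow> 'a \<Rightarrow> real"
    and phi :: "'a \<Rightarrow> 'h::{real_inner, complete_space}"
    and x :: "'n::finite \<Rightarrow> 'a"
    and z :: "'m::finite \<Rightarrow> 'a"
    and fstar :: "'a \<Rightarrow> real"
    and M :: "'w measure"
    and eps :: "'n \<Rightarrow> 'w \<Rightarrow> real"
    and sigma lam :: real
    and flam :: 'h
  assumes kernel: "\<And>u v. k u v = inner (phi u) (phi v)"
    and rkhs_dense: "closure (span (range phi)) = UNIV"
    and prob: "prob_space M"
    and indep: "prob_space.indep_vars M (\<lambda>_. borel) eps UNIV"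
    and ident: "\<And>i j. distr M borel (eps i) = distr M borel (eps j)"
    and sq_int: "\<And>i. integrable M (\<lambda>w. (eps i w)\<^sup>2)"
    and mean0: "\<And>i. integral\<^sup>L M (eps i) = 0"
    and var: "\<And>i. integral\<^sup>L M (\<lambda>w. (eps i w)\<^sup>2) = sigma\<^sup>2"
    and lam_pos: "lam > 0"
    and flam_min: "\<And>h. emp_risk lam phi x (\<lambda>i. fstar (x i)) flam
                        \<le> emp_risk lam phi x (\<lambda>i. fstar (x i)) h"
  shows "integral\<^sup>L M (\<lambda>w. emp_risk lam phi x (\<lambda>i. fstar (x i) + eps i w)
            (orth_proj (span (phi ` range z)) flam))
         \<le> 2 / (real CARD('n) * lam) * mat_trace (kmat_nn k x - kmat_tilde k x z)
              * integral\<^sup>L M (\<lambda>w. emp_risk lam phi x (\<lambda>i. fstar (x i) + eps i w) flam)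
           + 2 * integral\<^sup>L M (\<lambda>w. emp_risk lam phi x (\<lambda>i. fstar (x i) + eps i w) flam)"
proof -
  interpret prob_space M by (rule prob)
  have meas: "\<And>i. eps i \<in> borel_measurable M" using indep unfolding indep_vars_def2 by auto
  define psi where "psi = (\<lambda>j. phi (z j))"
  have img: "phi ` range z = range psi" unfolding psi_def by auto
  define A where "A = kmat_nn k z"
  have Adef: "A = (\<chi> j l. inner (psi j) (psi l))" by (simp add: A_def kmat_nn_def kernel psi_def)
  define B where "B = mp_pinv A"
  have mp: "is_mp_pinv A B" unfolding B_def by (rule mp_exists_sym[OF gram_sym[OF Adef]])
  define P where "P = orth_proj (span (range psi))"
  have PS: "P h \<in> span (range psi)" for h unfolding P_def by (rule proj_gram(2)[OF Adef mp])
  have Porth: "inner (h - P h) s = 0" if "s \<in> span (range psi)" for h s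
    unfolding P_def by (rule proj_gram(3)[OF Adef mp that])
  have Pform: "P h = comb psi (B *v bvec psi h)" for h unfolding P_def by (rule proj_gram(1)[OF Adef mp])
  have pp: "inner (h - P h) (P g) = 0" for h g using Porth PS by blast
  have selfadj: "inner (P f) g = inner f (P g)" for f g
  proof -
    have "inner (P f) g = inner (P f) (P g) + inner (P f) (g - P g)"
      by (simp add: inner_diff_right)
    moreover have "inner (P f) (g - P g) = 0" using pp[of g f] by (simp add: inner_commute)
    moreover have "inner f (P g) = inner (P f) (P g) + inner (f - P f) (P g)"
      by (simp add: inner_diff_left)
    ultimately show ?thesis using pp by simp
  qed
  have normP: "(norm (P f))\<^sup>2 \<le> (norm f)\<^sup>2" for f
  proof -
    have gen: "inner (a + b) (a + b) = inner a a + 2 * inner b a + inner b b" for a b :: 'h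
      by (simp add: inner_add_left inner_add_right inner_commute)
    have "inner f f = inner (P f) (P f) + 2 * inner (f - P f) (P f) + inner (f - P f) (f - P f)"
      using gen[of "P f" "f - P f"] by simp
    then have "inner f f = inner (P f) (P f) + inner (f - P f) (f - P f)" using pp by simp
    then show ?thesis by (simp add: power2_norm_eq_inner)
  qed
  define e where "e i = phi (x i) - P (phi (x i))" for i
  have ee: "inner (e i) (e i) = k (x i) (x i) - inner (phi (x i)) (P (phi (x i)))" for i
  proof -
    have "inner (e i) (e i) = inner (e i) (phi (x i)) - inner (e i) (P (phi (x i)))"
      unfolding e_def by (simp add: inner_diff_right)
    also have "inner (e i) (P (phi (x i))) = 0" unfolding e_def by (rule pp)
    finally show ?thesis unfolding e_def by (simp add: inner_diff_left inner_diff_right kernel inner_commute)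
  qed
  have Knm_row: "kmat_nm k x z $ i = bvec psi (phi (x i))" for i
    by (simp add: vec_eq_iff kmat_nm_def bvec_def kernel psi_def inner_commute)
  have kt: "kmat_tilde k x z $ i $ i = inner (phi (x i)) (P (phi (x i)))" for i
  proof -
    have "kmat_tilde k x z $ i $ i = inner (bvec psi (phi (x i))) (B *v bvec psi (phi (x i)))"
      unfolding kmat_tilde_def tilde_diag Knm_row B_def A_def ..
    also have "\<dots> = inner (P (phi (x i))) (phi (x i))"
      unfolding Pform inner_comb by (rule inner_commute)
    finally show ?thesis by (simp add: inner_commute)
  qed
  define T where "T = (\<Sum>i\<in>UNIV. inner (e i) (e i))"
  have trace: "mat_trace (kmat_nn k x - kmat_tilde k x z) = T"
    unfolding mat_trace_def T_def by (simp add: ee kt kmat_nn_def)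
  define f where "f = flam"
  have Pf: "orth_proj (span (phi ` range z)) flam = P f" unfolding img P_def f_def ..
  define n where "n = real CARD('n)"
  have n0: "n > 0" unfolding n_def by simp
  have pw: "emp_risk lam phi x Y (P f) \<le> 2 / (n * lam) * T * emp_risk lam phi x Y f + 2 * emp_risk lam phi x Y f"
    for Y
  proof -
    have res: "inner (P f) (phi (x i)) - Y i = (inner f (phi (x i)) - Y i) - inner f (e i)" for i
      using selfadj[of f "phi (x i)"] unfolding e_def by (simp add: inner_diff_right)
    have cs: "(inner f (e i))\<^sup>2 \<le> (norm f)\<^sup>2 * inner (e i) (e i)" for i
      using Cauchy_Schwarz_ineq[of f "e i"] by (simp add: power2_norm_eq_inner)
    have "(1/n) * (\<Sum>i\<in>UNIV. ((inner f (phi (x i)) - Y i) - inner f (e i))\<^sup>2) + lam * (norm (P f))\<^sup>2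
     \<le> 2 / (n * lam) * (\<Sum>i\<in>UNIV. inner (e i) (e i)) * ((1/n) * (\<Sum>i\<in>UNIV. (inner f (phi (x i)) - Y i)\<^sup>2) + lam * (norm f)\<^sup>2)
       + 2 * ((1/n) * (\<Sum>i\<in>UNIV. (inner f (phi (x i)) - Y i)\<^sup>2) + lam * (norm f)\<^sup>2)"
      by (rule pointwise[OF n0 lam_pos cs _ normP]) auto
    then show ?thesis unfolding emp_risk_def T_def n_def res by simp
  qed
  define E where "E w = emp_risk lam phi x (\<lambda>i. fstar (x i) + eps i w) f" for w
  define G where "G w = emp_risk lam phi x (\<lambda>i. fstar (x i) + eps i w) (P f)" for w
  define c where "c = 2 / (n * lam) * T"
  have iE: "integrable M E" unfolding E_def by (rule integrable_emp[OF prob meas sq_int])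
  have iG: "integrable M G" unfolding G_def by (rule integrable_emp[OF prob meas sq_int])
  have "integral\<^sup>L M G \<le> integral\<^sup>L M (\<lambda>w. (c + 2) * E w)"
    using iE iG pw unfolding E_def G_def c_def
    by (intro integral_mono) (auto simp: distrib_right)
  also have "\<dots> = c * integral\<^sup>L M E + 2 * integral\<^sup>L M E" by (subst integral_mult_right_zero) (simp add: distrib_right)
  finally have fin: "integral\<^sup>L M G \<le> c * integral\<^sup>L M E + 2 * integral\<^sup>L M E" .
  have Ef: "E = (\<lambda>w. emp_risk lam phi x (\<lambda>i. fstar (x i) + eps i w) flam)"
    by (simp add: fun_eq_iff E_def f_def)
  have Gf: "G = (\<lambda>w. emp_risk lam phi x (\<lambda>i. fstar (x i) + eps i w) (orth_proj (span (phi ` range z)) flam))"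
    by (simp add: fun_eq_iff G_def Pf)
  show ?thesis using fin unfolding Ef Gf c_def trace n_def .
qed


end
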